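(* The parent relation of the Explicit Tree $\mathbf T$ is well defined and $\mathbf T$ is a directed spanning tree of $\mathbf G$ rooted at $\mathcal R$ (for every $\mathcal U\neq\mathcal R$, $(parent(\mathcal U),\mathcal U)$ is an arc of $\mathbf G$, and the parent relation has no cycles).
   Context: Let $k\ge 2$, $\Sigma=\{0,\dots,k-1\}$ with arithmetic modulo $k$, $n\ge 1$, $s=s[0]\cdots s[n-1]\in\Sigma^n$. For an integer $j$, $ICR_j(s)=s[1]\cdots s[n-1](s[0]+j)$. Let $\mathbf N$ be the set of cycles (orbits) of the permutation $ICR_1$ of $\Sigma^n$. Let $\mathbf G$ be the directed graph on $\mathbf N$ with an arc $(\mathcal U,\mathcal V)$ iff some $s\in\mathcal U$ has $ICR_0(s)\in\mathcal V$. The difference array $\Delta(s)\in\Sigma^n$ is $\Delta(s)[i]=s[i-1]-s[i]$ for $0<i<n$ and $\Delta(s)[0]=s[n-1]-s[0]-1$ (mod $k$). Two strings $s,t$ lie in the same cycle iff $\Delta(s)$ and $\Delta(t)$ are cyclic rotations of each other; for a cycle $\mathcal U$, $\Delta(\mathcal U)$ denotes the lexicographically minimal rotation of $\Delta(s)$ for any $s\in\mathcal U$ (lexicographic order using $0<1<\dots<k-1$). Explicit Tree $\mathbf T$: the root $\mathcal R$ is the cycle of $0^n$; for $\mathcal U\in\mathbf N\setminus\{\mathcal R\}$, let $i$ be the least index with $\Delta(\mathcal U)[i]\ne0$, let $A$ be obtained from $\Delta(\mathcal U)$ by decrementing entry $i$ and incrementing entry $i+1$ (mod $k$), and let $parent(\mathcal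 U)$ be the unique cycle $\mathcal V$ with $\Delta(\mathcal V)$ equal to $A$ up to rotation. *)

theory Defs
  imports Main
begin

definition strs :: "nat \<Rightarrow> nat \<Rightarrow> nat list set" where
  "strs k n = {s. length s = n \<and> set s \<subseteq> {..<k}}"

definition icr :: "nat \<Rightarrow> nat \<Rightarrow> nat list \<Rightarrow> nat list" where
  "icr k j s = tl s @ [(hd s + j) mod k]"

definition cyc :: "nat \<Rightarrow> nat list \<Rightarrow> nat list set" where
  "cyc k s = {t. \<exists>m. t = (icr k 1 ^^ m) s}"

definition cycles :: "nat \<Rightarrow> nat \<Rightarrow> nat list set set" where
  "cycles k n = cyc k ` strs k n"

definition G_arc :: "nat \<Rightarrow> nat list set \<Rightarrow> nat list set \<Rightarrow> bool" where
  "G_arc k U V \<longleftrightarrow> (\<exists>s\<in>U. icr k 0 s \<in> V)"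

definition delta :: "nat \<Rightarrow> nat list \<Rightarrow> nat list" where
  "delta k s = map (\<lambda>i. if i = 0
        then nat ((int (s ! (length s - 1)) - int (s ! 0) - 1) mod int k)
        else nat ((int (s ! (i - 1)) - int (s ! i)) mod int k)) [0..<length s]"

definition lexmin_rot :: "nat list \<Rightarrow> nat list" where
  "lexmin_rot xs = (THE r. (\<exists>m. r = rotate m xs) \<and>
      (\<forall>m. r = rotate m xs \<or> (r, rotate m xs) \<in> lexord {(a, b). a < b}))"

definition deltaC :: "nat \<Rightarrow> nat list set \<Rightarrow> nat list" where
  "deltaC k U = lexmin_rot (delta k (SOME s. s \<in> U))"

definition root :: "nat \<Rightarrow> nat \<Rightarrow> nat list set" where
  "root k n = cyc k (replicate n 0)"

text \<open>The array A obtained from Delta(U): decrement the first nonzero entry i,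
  increment entry i+1 (index taken mod n; for U different from the root one has i+1 < n).\<close>
definition parent_array :: "nat \<Rightarrow> nat list \<Rightarrow> nat list" where
  "parent_array k D = (let n = length D; i = (LEAST i. i < n \<and> D ! i \<noteq> 0);
       j = (i + 1) mod n;
       D1 = D[i := (D ! i + k - 1) mod k]
     in D1[j := (D1 ! j + 1) mod k])"

definition is_parent :: "nat \<Rightarrow> nat \<Rightarrow> nat list set \<Rightarrow> nat list set \<Rightarrow> bool" where
  "is_parent k n U V \<longleftrightarrow> V \<in> cycles k n \<and>
      (\<exists>m. deltaC k V = rotate m (parent_array k (deltaC k U)))"

definition parent :: "nat \<Rightarrow> nat \<Rightarrow> nat list set \<Rightarrow> nat list set" where
  "parent k n U = (THE V. is_parent k n U V)"

end

theory Submission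
  imports Defs "HOL-Library.List_Lexorder"
begin

lemma strsD: "s \<in> strs k n \<Longrightarrow> length s = n \<and> (\<forall>x\<in>set s. x < k)"
  by (auto simp: strs_def)

lemma strs_nth: "s \<in> strs k n \<Longrightarrow> j < n \<Longrightarrow> s ! j < k"
  by (auto simp: strs_def dest!: nth_mem)

lemma icr_strs: "s \<in> strs k n \<Longrightarrow> n \<ge> 1 \<Longrightarrow> k > 0 \<Longrightarrow> icr k j s \<in> strs k n"
  by (cases s) (auto simp: strs_def icr_def)

lemma icr_pow_strs: "s \<in> strs k n \<Longrightarrow> n \<ge> 1 \<Longrightarrow> k > 0 \<Longrightarrow> (icr k j ^^ m) s \<in> strs k n"
  by (induction m) (auto intro: icr_strs)

lemma length_delta[simp]: "length (delta k s) = length s"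
  by (simp add: delta_def)

lemma nth_delta: "j < length s \<Longrightarrow> delta k s ! j = (if j = 0
        then nat ((int (s ! (length s - 1)) - int (s ! 0) - 1) mod int k)
        else nat ((int (s ! (j - 1)) - int (s ! j)) mod int k))"
  by (simp add: delta_def del: upt_Suc)

lemma delta_lt: "k > 0 \<Longrightarrow> x \<in> set (delta k s) \<Longrightarrow> x < k"
  by (auto simp: delta_def nat_less_iff)

lemma nth_icr: "j < length s \<Longrightarrow> icr k i s ! j = (if j + 1 < length s then s ! (j+1) else (s ! 0 + i) mod k)"
  by (cases s) (auto simp: icr_def nth_append hd_conv_nth)

lemma length_icr[simp]: "s \<noteq> [] \<Longrightarrow> length (icr k i s) = length s"
  by (simp add: icr_def)

lemma delta_icr: assumes "s \<in> strs k n" "n \<ge> 1" "k > 0"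
  shows "delta k (icr k 1 s) = rotate 1 (delta k s)"
proof (rule nth_equalityI)
  have ls: "length s = n" "s \<noteq> []" using assms strsD by force+
  show "length (delta k (icr k 1 s)) = length (rotate 1 (delta k s))" using ls by simp
  fix j assume "j < length (delta k (icr k 1 s))"
  hence j: "j < n" using ls by simp
  have i1: "int ((a + 1) mod k) = (int a + 1) mod int k" for a by (simp add: zmod_int add.commute)
  have i2: "(int (Suc a mod k) - b - 1) mod int k = (int a - b) mod int k" for a b
  proof -
    have "int (Suc a mod k) = (int a + 1) mod int k" by (simp add: zmod_int add.commute)
    hence "(int (Suc a mod k) - b - 1) mod int k = ((int a + 1) mod int k - b - 1) mod int k" by simp
    also have "\<dots> = ((int a + 1) mod int k - (b + 1)) mod int k" by (simp add: algebra_simps)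
    also have "\<dots> = (int a + 1 - (b + 1)) mod int k" by (rule mod_diff_left_eq)
    finally show ?thesis by simp
  qed
  have i3: "(b - int (Suc a mod k)) mod int k = (b - int a - 1) mod int k" for a b
  proof -
    have "int (Suc a mod k) = (int a + 1) mod int k" by (simp add: zmod_int add.commute)
    hence "(b - int (Suc a mod k)) mod int k = (b - (int a + 1) mod int k) mod int k" by simp
    also have "\<dots> = (b - (int a + 1)) mod int k" by (rule mod_diff_right_eq)
    finally show ?thesis by (simp add: algebra_simps)
  qed
  show "delta k (icr k 1 s) ! j = rotate 1 (delta k s) ! j"
  proof -
    have r: "rotate 1 (delta k s) ! j = delta k s ! ((1 + j) mod n)" using j ls by (simp add: nth_rotate1)
    consider "j = 0" "n = 1" | "j = 0" "n > 1" | "j > 0" "j + 1 < n" | "j > 0" "j + 1 = n" using j by linarith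
    thus ?thesis
    proof cases
      case 1
      then show ?thesis using r ls by (simp add: nth_delta nth_icr i1 i2)
    next
      case 2
      then show ?thesis using r ls by (simp add: nth_delta nth_icr i1 i2)
    next
      case 3
      then show ?thesis using r ls by (simp add: nth_delta nth_icr)
    next
      case 4
      then have "j = n - 1" "Suc (n - Suc (Suc 0)) = n - Suc 0" by simp_all
      then show ?thesis using r ls 4 by (simp add: nth_delta nth_icr i1 i2 i3)
    qed
  qed
qed


lemma delta_icr_pow: assumes "s \<in> strs k n" "n \<ge> 1" "k > 0"
  shows "delta k ((icr k 1 ^^ m) s) = rotate m (delta k s)"
proof (induction m)
  case 0 then show ?case by simp
next
  case (Suc m)
  have "delta k ((icr k 1 ^^ Suc m) s) = delta k (icr k 1 ((icr k 1 ^^ m) s))" by simp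
  also have "\<dots> = rotate 1 (delta k ((icr k 1 ^^ m) s))"
    using delta_icr icr_pow_strs assms by blast
  also have "\<dots> = rotate (Suc m) (delta k s)" using Suc by (simp add: rotate_rotate)
  finally show ?case .
qed

lemma icr_pow_drop: "m \<le> length s \<Longrightarrow>
   (icr k 1 ^^ m) s = drop m s @ map (\<lambda>x. (x+1) mod k) (take m s)"
proof (induction m)
  case 0 then show ?case by simp
next
  case (Suc m)
  hence m: "m < length s" by simp
  have "(icr k 1 ^^ Suc m) s = icr k 1 (drop m s @ map (\<lambda>x. (x+1) mod k) (take m s))"
    using Suc by simp
  also have "\<dots> = drop (Suc m) s @ map (\<lambda>x. (x+1) mod k) (take (Suc m) s)"
    using m by (simp add: icr_def take_Suc_conv_app_nth hd_drop_conv_nth drop_Suc tl_drop)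
  finally show ?case .
qed

lemma icr_pow_shift: assumes "s \<in> strs k n"
  shows "(icr k 1 ^^ (n*c)) s = map (\<lambda>x. (x+c) mod k) s"
proof (induction c)
  case 0
  have "map (\<lambda>x. x mod k) s = s"
    using assms by (auto simp: strs_def intro!: map_idI)
  then show ?case by simp
next
  case (Suc c)
  have ls: "length s = n" using assms by (simp add: strs_def)
  have "(icr k 1 ^^ (n * Suc c)) s = (icr k 1 ^^ n) ((icr k 1 ^^ (n*c)) s)"
    by (simp add: funpow_add)
  also have "\<dots> = map (\<lambda>x. (x+1) mod k) (map (\<lambda>x. (x+c) mod k) s)"
    using icr_pow_drop[of n "map (\<lambda>x. (x+c) mod k) s" k] Suc ls by simp
  also have "\<dots> = map (\<lambda>x. (x + Suc c) mod k) s" by (simp add: mod_simps)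
  finally show ?case .
qed

lemma int_mod_eq_helper: assumes "a < k" "int k dvd (int a - int b)" shows "a = b mod k"
proof -
  have "int a mod int k = int b mod int k" using assms(2) by (simp add: mod_eq_dvd_iff)
  hence "int a = int (b mod k)" using assms(1) by (simp add: zmod_int)
  thus ?thesis by simp
qed

lemma delta_eq_shift: assumes s: "s \<in> strs k n" and t: "t \<in> strs k n" and "k > 0"
  and d: "delta k s = delta k t"
  shows "\<exists>c. t = map (\<lambda>x. (x+c) mod k) s"
proof -
  have ls: "length s = n" "length t = n" using s t by (auto simp: strs_def)
  define c where "c = (t!0 + k - s!0) mod k"
  have inv: "j < n \<Longrightarrow> int k dvd (int (t!j) - int (s!j) - int c)" for j
  proof (induction j)
    case 0
    define X where "X = int (t!0 + k - s!0)"
    have X: "X = int (t!0) - int (s!0) + int k" using strs_nth[OF s 0] \<open>k>0\<close> unfolding X_def by simp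
    have c: "int c = X mod int k" unfolding c_def X_def by (simp add: zmod_int)
    have "int k dvd X - X mod int k" by (rule dvd_minus_mod)
    hence "int k dvd (X - X mod int k) - int k" by (simp add: dvd_diff)
    moreover have "(X - X mod int k) - int k = int (t!0) - int (s!0) - int c" using X c by simp
    ultimately show ?case by simp
  next
    case (Suc j)
    have "delta k s ! Suc j = delta k t ! Suc j" using d by simp
    hence "nat ((int (s ! j) - int (s ! Suc j)) mod int k) = nat ((int (t ! j) - int (t ! Suc j)) mod int k)"
      using Suc.prems ls by (simp add: nth_delta)
    hence "(int (s ! j) - int (s ! Suc j)) mod int k = (int (t ! j) - int (t ! Suc j)) mod int k"
      using assms(3) by (subst (asm) eq_nat_nat_iff) auto
    hence "int k dvd ((int (s ! j) - int (s ! Suc j)) - (int (t ! j) - int (t ! Suc j)))"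
      by (simp add: mod_eq_dvd_iff)
    moreover have "int k dvd (int (t!j) - int (s!j) - int c)" using Suc by simp
    ultimately have "int k dvd ((int (s ! j) - int (s ! Suc j)) - (int (t ! j) - int (t ! Suc j)) + (int (t!j) - int (s!j) - int c))"
      by (rule dvd_add)
    thus ?case by (simp add: algebra_simps)
  qed
  have "t = map (\<lambda>x. (x+c) mod k) s"
  proof (rule nth_equalityI)
    show "length t = length (map (\<lambda>x. (x + c) mod k) s)" using ls by simp
    fix j assume "j < length t"
    hence j: "j < n" using ls by simp
    have "t ! j = (s!j + c) mod k"
      apply (rule int_mod_eq_helper[OF strs_nth[OF t j]])
      using inv[OF j] by (simp add: algebra_simps)
    thus "t ! j = map (\<lambda>x. (x + c) mod k) s ! j" using j ls by simp
  qed
  thus ?thesis by blast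
qed

lemma cyc_self: "s \<in> cyc k s"
  unfolding cyc_def by (auto intro: exI[of _ 0])

lemma cyc_trans: assumes "t \<in> cyc k s" shows "cyc k t \<subseteq> cyc k s"
proof
  fix u assume "u \<in> cyc k t"
  then obtain b where b: "u = (icr k 1 ^^ b) t" by (auto simp: cyc_def)
  obtain a where a: "t = (icr k 1 ^^ a) s" using \<open>t \<in> cyc k s\<close> by (auto simp: cyc_def)
  have "u = (icr k 1 ^^ (b + a)) s" using a b by (simp add: funpow_add)
  thus "u \<in> cyc k s" by (auto simp: cyc_def)
qed

lemma L_in: assumes s: "s \<in> strs k n" and t: "t \<in> strs k n" and "k > 0" "n \<ge> 1"
  and d: "delta k t = rotate p (delta k s)"
  shows "t \<in> cyc k s"
proof -
  define s' where "s' = (icr k 1 ^^ p) s"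
  have s': "s' \<in> strs k n" using icr_pow_strs assms s'_def by blast
  have "delta k s' = delta k t" using delta_icr_pow[OF s] assms s'_def by simp
  then obtain c where "t = map (\<lambda>x. (x+c) mod k) s'" using delta_eq_shift[OF s' t] assms by blast
  hence "t = (icr k 1 ^^ (n*c)) s'" using icr_pow_shift[OF s'] by simp
  hence "t = (icr k 1 ^^ (n*c + p)) s" by (simp add: s'_def funpow_add)
  thus ?thesis unfolding cyc_def by blast
qed

lemma rot_sym: "y = rotate m x \<Longrightarrow> \<exists>m'. x = rotate m' y"
proof -
  assume y: "y = rotate m x"
  show ?thesis
  proof (cases "length x = 0")
    case True then show ?thesis using y by simp
  next
    case False
    have "rotate (length x - m mod length x) y = rotate (length x - m mod length x + m) x"
      using y by (simp add: rotate_rotate)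
    also have "\<dots> = x"
    proof (rule rotate_id)
      have "(length x - m mod length x + m) mod length x = (length x - m mod length x + m mod length x) mod length x"
        by (simp add: mod_simps)
      also have "\<dots> = 0" using False by simp
      finally show "(length x - m mod length x + m) mod length x = 0" .
    qed
    finally show ?thesis by metis
  qed
qed

lemma L_same: assumes s: "s \<in> strs k n" and t: "t \<in> strs k n" and "k > 0" "n \<ge> 1"
  and d: "delta k t = rotate p (delta k s)"
  shows "cyc k t = cyc k s"
proof
  show "cyc k t \<subseteq> cyc k s" using cyc_trans L_in assms by blast
  obtain p' where "delta k s = rotate p' (delta k t)" using rot_sym[OF d] by blast
  then show "cyc k s \<subseteq> cyc k t" using cyc_trans L_in assms by blast
qed

lemma cyc_strs: "s \<in> strs k n \<Longrightarrow> k > 0 \<Longrightarrow> n \<ge> 1 \<Longrightarrow> t \<in> cyc k s \<Longrightarrow> t \<in> strs k n"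
  unfolding cyc_def using icr_pow_strs by blast

lemma cyc_delta: "s \<in> strs k n \<Longrightarrow> k > 0 \<Longrightarrow> n \<ge> 1 \<Longrightarrow> t \<in> cyc k s \<Longrightarrow> \<exists>p. delta k t = rotate p (delta k s)"
  unfolding cyc_def using delta_icr_pow by blast

lemma cyc_eq: "s \<in> strs k n \<Longrightarrow> k > 0 \<Longrightarrow> n \<ge> 1 \<Longrightarrow> t \<in> cyc k s \<Longrightarrow> cyc k t = cyc k s"
  using cyc_delta cyc_strs L_same by blast


lemma lexmin_rot_prop:
  "(\<exists>m. lexmin_rot xs = rotate m xs) \<and> (\<forall>m. lexmin_rot xs \<le> rotate m xs)"
proof -
  define R where "R = range (\<lambda>m. rotate m xs)"
  have "R \<subseteq> {ys. set ys \<subseteq> set xs \<and> length ys = length xs}" unfolding R_def by auto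
  hence fin: "finite R" using finite_lists_length_eq[of "set xs" "length xs"] finite_subset by blast
  have ne: "R \<noteq> {}" unfolding R_def by auto
  define M where "M = Min R"
  have MR: "M \<in> R" using Min_in[OF fin ne] M_def by simp
  have Ml: "\<forall>y\<in>R. M \<le> y" using Min_le[OF fin] M_def by simp
  let ?P = "\<lambda>r. (\<exists>m. r = rotate m xs) \<and>
      (\<forall>m. r = rotate m xs \<or> (r, rotate m xs) \<in> lexord {(a, b). a < b})"
  have PM: "?P M" using MR Ml unfolding R_def by (auto simp: list_le_def list_less_def)
  have uq: "r = M" if "?P r" for r
  proof -
    have rR: "r \<in> R" and rl: "\<forall>y\<in>R. r \<le> y" using that unfolding R_def
      by (auto simp: list_le_def list_less_def)
    show ?thesis using rR rl MR Ml by (meson order_antisym)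
  qed
  have "lexmin_rot xs = M" unfolding lexmin_rot_def
    using PM uq by (rule the_equality)
  thus ?thesis using MR Ml unfolding R_def by auto
qed

lemma cycles_cyc: "U \<in> cycles k n \<Longrightarrow> \<exists>s0\<in>strs k n. U = cyc k s0"
  by (auto simp: cycles_def)

lemma deltaC_rot: assumes "s0 \<in> strs k n" "k > 0" "n \<ge> 1"
  shows "\<exists>c. deltaC k (cyc k s0) = rotate c (delta k s0)"
proof -
  define x where "x = (SOME s. s \<in> cyc k s0)"
  have "x \<in> cyc k s0" unfolding x_def using cyc_self by (metis someI)
  then obtain p where p: "delta k x = rotate p (delta k s0)" using cyc_delta assms by blast
  obtain m where "lexmin_rot (delta k x) = rotate m (delta k x)" using lexmin_rot_prop by blast
  hence "deltaC k (cyc k s0) = rotate (m + p) (delta k s0)"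
    unfolding deltaC_def x_def[symmetric] using p by (simp add: rotate_rotate)
  thus ?thesis by blast
qed

lemma deltaC_le: assumes "s0 \<in> strs k n" "k > 0" "n \<ge> 1"
  shows "deltaC k (cyc k s0) \<le> rotate q (delta k s0)"
proof -
  define x where "x = (SOME s. s \<in> cyc k s0)"
  have "x \<in> cyc k s0" unfolding x_def using cyc_self by (metis someI)
  then obtain p where p: "delta k x = rotate p (delta k s0)" using cyc_delta assms by blast
  then obtain p' where p': "delta k s0 = rotate p' (delta k x)" using rot_sym by blast
  have "lexmin_rot (delta k x) \<le> rotate (q + p') (delta k x)" using lexmin_rot_prop by blast
  thus ?thesis unfolding deltaC_def x_def[symmetric] using p' by (simp add: rotate_rotate)
qed

lemma deltaC_length: assumes "s0 \<in> strs k n" "k > 0" "n \<ge> 1"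
  shows "length (deltaC k (cyc k s0)) = n"
  using deltaC_rot[OF assms] assms(1) by (auto simp: strs_def)

lemma deltaC_lt: assumes "s0 \<in> strs k n" "k > 0" "n \<ge> 1" "j < n"
  shows "deltaC k (cyc k s0) ! j < k"
proof -
  obtain c where c: "deltaC k (cyc k s0) = rotate c (delta k s0)" using deltaC_rot[OF assms(1-3)] by blast
  have "deltaC k (cyc k s0) ! j \<in> set (deltaC k (cyc k s0))"
    using deltaC_length[OF assms(1-3)] assms(4) by simp
  hence "deltaC k (cyc k s0) ! j \<in> set (delta k s0)" using c by simp
  thus ?thesis using delta_lt assms by blast
qed

lemma deltaC_member: assumes "s0 \<in> strs k n" "k > 0" "n \<ge> 1"
  shows "\<exists>u\<in>cyc k s0. delta k u = rotate q (deltaC k (cyc k s0))"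
proof -
  obtain c where c: "deltaC k (cyc k s0) = rotate c (delta k s0)" using deltaC_rot[OF assms] by blast
  have "delta k ((icr k 1 ^^ (q + c)) s0) = rotate q (deltaC k (cyc k s0))"
    using delta_icr_pow[OF assms(1,3,2)] c by (simp add: rotate_rotate)
  moreover have "(icr k 1 ^^ (q + c)) s0 \<in> cyc k s0" by (auto simp: cyc_def)
  ultimately show ?thesis by blast
qed


lemma eq_of_mod0: assumes "a < k" "b < k" "nat ((int a - int b) mod int k) = 0" shows "a = b"
proof -
  have kp: "int k > 0" using assms by simp
  have "(int a - int b) mod int k \<ge> 0" using kp by simp
  hence "(int a - int b) mod int k = 0" using assms(3) by (simp add: nat_eq_iff2)
  hence "int k dvd (int a - int b)" by (simp add: mod_eq_0_iff_dvd)
  hence "a = b mod k" using int_mod_eq_helper assms by blast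
  thus ?thesis using assms by simp
qed

lemma root_char: assumes s0: "s0 \<in> strs k n" and k: "k \<ge> 2" and n: "n \<ge> 1"
  and z: "\<forall>x<n-1. deltaC k (cyc k s0) ! x = 0"
  shows "cyc k s0 = root k n"
proof -
  have kp: "k > 0" using k by simp
  obtain u where u: "u \<in> cyc k s0" "delta k u = rotate (n-1) (deltaC k (cyc k s0))"
    using deltaC_member[OF s0 kp n, of "n-1"] by (elim bexE) blast
  have us: "u \<in> strs k n" using cyc_strs[OF s0 kp n u(1)] .
  have lu: "length u = n" using us by (simp add: strs_def)
  have ldc: "length (deltaC k (cyc k s0)) = n" using deltaC_length[OF s0 kp n] .
  have step: "u ! (j - 1) = u ! j" if jj: "0 < j" "j < n" for j
  proof -
    obtain j' where j': "j = Suc j'" using jj(1) by (cases j) auto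
    have idx: "(n - 1 + j) mod n = j'"
    proof -
      have e: "n - 1 + j = j' + n" using jj j' by simp
      have "(j' + n) mod n = j'" using jj j' by (simp only: mod_add_self2) simp
      thus ?thesis using e by simp
    qed
    have "delta k u ! j = deltaC k (cyc k s0) ! ((n - 1 + j) mod n)"
      using nth_rotate[of j "deltaC k (cyc k s0)" "n-1"] u(2) jj ldc by simp
    hence "delta k u ! j = deltaC k (cyc k s0) ! j'" using idx by simp
    hence "delta k u ! j = 0" using z j' jj by simp
    hence h3: "nat ((int (u ! j') - int (u ! j)) mod int k) = 0" using jj lu j' by (simp add: nth_delta)
    have h1: "u ! j' < k" using strs_nth[OF us, of j'] jj j' by simp
    have h2: "u ! j < k" using strs_nth[OF us, of j] jj by simp
    have "u ! j' = u ! j" using h1 h2 h3 by (rule eq_of_mod0)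
    thus ?thesis using j' by simp
  qed
  have all: "j < n \<Longrightarrow> u ! j = u ! 0" for j
  proof (induction j)
    case 0 then show ?case by simp
  next
    case (Suc j)
    have "u ! j = u ! 0" using Suc.IH Suc.prems by simp
    moreover have "u ! (Suc j - 1) = u ! Suc j" using step[of "Suc j"] Suc.prems by simp
    ultimately show ?case by simp
  qed
  define c where "c = u ! 0"
  have c: "c < k" using strs_nth[OF us, of 0] n c_def by simp
  have uc: "u = replicate n c"
  proof (rule nth_equalityI)
    show "length u = length (replicate n c)" using lu by simp
    fix j assume "j < length u"
    hence "j < n" using lu by simp
    from all[OF this] show "u ! j = replicate n c ! j" using \<open>j < n\<close> c_def by simp
  qed
  have r0: "replicate n 0 \<in> strs k n" using kp by (auto simp: strs_def)
  have sh: "(icr k 1 ^^ (n*c)) (replicate n 0) = map (\<lambda>x. (x+c) mod k) (replicate n 0)"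
    by (rule icr_pow_shift[OF r0])
  have "map (\<lambda>x. (x+c) mod k) (replicate n 0) = replicate n c" using c by simp
  hence "u = (icr k 1 ^^ (n*c)) (replicate n 0)" using uc sh by simp
  hence "u \<in> cyc k (replicate n 0)" unfolding cyc_def by blast
  hence "cyc k u = root k n" unfolding root_def by (rule cyc_eq[OF r0 kp n])
  moreover have "cyc k u = cyc k s0" using cyc_eq[OF s0 kp n u(1)] .
  ultimately show ?thesis by simp
qed


lemma h1: "k > 0 \<Longrightarrow> nat ((x - 1) mod int k) = (nat (x mod int k) + k - 1) mod k"
proof -
  assume kp: "k > 0"
  have "int ((nat (x mod int k) + k - 1) mod k) = (int (nat (x mod int k) + k - 1)) mod int k"
    by (simp add: zmod_int)
  also have "int (nat (x mod int k) + k - 1) = x mod int k + (int k - 1)" using kp by simp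
  also have "(x mod int k + (int k - 1)) mod int k = (x + (int k - 1)) mod int k" by (simp add: mod_simps)
  also have "x + (int k - 1) = (x - 1) + int k" by simp
  also have "((x - 1) + int k) mod int k = (x - 1) mod int k" by simp
  finally have "int ((nat (x mod int k) + k - 1) mod k) = (x - 1) mod int k" .
  thus ?thesis by (metis nat_int)
qed

lemma h2: "k > 0 \<Longrightarrow> nat (x mod int k) = (nat ((x - 1) mod int k) + 1) mod k"
proof -
  assume kp: "k > 0"
  have "int ((nat ((x - 1) mod int k) + 1) mod k) = (int (nat ((x - 1) mod int k)) + 1) mod int k"
    by (simp add: zmod_int add.commute)
  also have "int (nat ((x - 1) mod int k)) = (x - 1) mod int k" using kp by simp
  also have "((x - 1) mod int k + 1) mod int k = (x - 1 + 1) mod int k" by (simp add: mod_simps)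
  finally have "int ((nat ((x - 1) mod int k) + 1) mod k) = x mod int k" by simp
  thus ?thesis by (metis nat_int)
qed

lemma key: assumes s0: "s0 \<in> strs k n" and k: "k \<ge> 2" and n: "n \<ge> 1"
  and nr: "cyc k s0 \<noteq> root k n"
  shows "\<exists>s\<in>strs k n. icr k 0 s \<in> cyc k s0
     \<and> (\<exists>q. delta k s = rotate q (parent_array k (deltaC k (cyc k s0))))
     \<and> parent_array k (deltaC k (cyc k s0)) < deltaC k (cyc k s0)"
proof -
  have kp: "k > 0" using k by simp
  define D where "D = deltaC k (cyc k s0)"
  define A where "A = parent_array k D"
  have ldc: "length D = n" unfolding D_def using deltaC_length[OF s0 kp n] .
  have Dlt: "\<And>j. j < n \<Longrightarrow> D ! j < k" unfolding D_def using deltaC_lt[OF s0 kp n] by blast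
  have ex: "\<exists>x<n-1. D ! x \<noteq> 0" using root_char[OF s0 k n] nr unfolding D_def by blast
  then obtain x where x: "x < n - 1" "D ! x \<noteq> 0" by blast
  define i where "i = (LEAST i. i < n \<and> D ! i \<noteq> 0)"
  have iP: "i < n \<and> D ! i \<noteq> 0" unfolding i_def by (rule LeastI[of _ x]) (use x in simp)
  have "i \<le> x" unfolding i_def by (rule Least_le) (use x in simp)
  hence i1: "i + 1 < n" using x by simp
  have Aeq: "A = (D[i := (D!i + k - 1) mod k])[i+1 := (D!(i+1) + 1) mod k]"
    unfolding A_def parent_array_def Let_def ldc i_def[symmetric] using i1 by simp
  have lA: "length A = n" using Aeq ldc by simp
  have Anth: "A ! y = (if y = i+1 then (D!(i+1)+1) mod k else if y = i then (D!i+k-1) mod k else D!y)"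
    if "y < n" for y
    using Aeq that ldc by (simp add: nth_list_update)
  have Ai: "A ! i = D ! i - 1"
  proof -
    obtain d where d: "D ! i = Suc d" using iP by (cases "D ! i") auto
    have dk: "d < k" using Dlt[of i] iP d by simp
    have "A ! i = (D!i+k-1) mod k" using Anth[of i] i1 by simp
    also have "\<dots> = (d + k) mod k" using d by simp
    also have "\<dots> = d" using dk by simp
    finally show ?thesis using d by simp
  qed
  have AD: "A < D"
  proof -
    have "take i A = take i D" using Aeq by (simp add: take_update_cancel)
    moreover have "A ! i < D ! i" using Ai iP by simp
    ultimately have "(A, D) \<in> lexord {(a, b). a < b}"
      unfolding lexord_take_index_conv using lA ldc iP by auto
    thus ?thesis by (simp add: list_less_def)
  qed
  obtain u where u: "u \<in> cyc k s0" "delta k u = rotate (i+1) D"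
    using deltaC_member[OF s0 kp n, of "i+1"] unfolding D_def by (elim bexE) blast
  have us: "u \<in> strs k n" using cyc_strs[OF s0 kp n u(1)] .
  have lu: "length u = n" using us by (simp add: strs_def)
  have une: "u \<noteq> []" using lu n by auto
  define s where "s = last u # butlast u"
  have ls: "length s = n" using lu une n unfolding s_def by simp
  have s0n: "s ! 0 = u ! (n - 1)" unfolding s_def using une lu by (simp add: last_conv_nth)
  have sjn: "s ! j = u ! (j - 1)" if "0 < j" "j < n" for j
    unfolding s_def using that lu by (cases j) (auto simp: nth_butlast)
  have ss: "s \<in> strs k n"
  proof -
    have "set s \<subseteq> set u" unfolding s_def using une
      by (auto dest: in_set_butlastD)
    thus ?thesis using us ls unfolding strs_def by blast
  qed
  have icr_s: "icr k 0 s = u"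
  proof -
    have "last u < k" using strs_nth[OF us, of "n-1"] une lu n by (simp add: last_conv_nth)
    thus ?thesis unfolding icr_def s_def using une by simp
  qed
  have du: "delta k u ! j = D ! ((i + 1 + j) mod n)" if "j < n" for j
    using u(2) nth_rotate[of j D "i+1"] that ldc by (simp del: rotate_Suc)
  have ds: "delta k s = rotate i A"
  proof (rule nth_equalityI)
    show "length (delta k s) = length (rotate i A)" using ls lA by simp
    fix j assume "j < length (delta k s)"
    hence j: "j < n" using ls by simp
    have rA: "rotate i A ! j = A ! ((i + j) mod n)" using j lA by (simp add: nth_rotate)
    consider "j = 0" | "j = 1" | "2 \<le> j" by linarith
    thus "delta k s ! j = rotate i A ! j"
    proof cases
      case 1
      have n2: "n - 1 - 1 = n - 2" "0 < n - 1" using i1 by auto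
      have "delta k s ! j = nat ((int (s ! (n - 1)) - int (s ! 0) - 1) mod int k)"
        using 1 ls j by (simp add: nth_delta)
      also have "\<dots> = nat ((int (u ! (n - 2)) - int (u ! (n - 1)) - 1) mod int k)"
        using sjn[of "n-1"] s0n n2 i1 by simp
      also have "\<dots> = (nat ((int (u ! (n - 2)) - int (u ! (n - 1))) mod int k) + k - 1) mod k"
        by (rule h1[OF kp])
      also have "nat ((int (u ! (n - 2)) - int (u ! (n - 1))) mod int k) = delta k u ! (n - 1)"
        using lu n2 i1 by (simp add: nth_delta)
      also have "delta k u ! (n - 1) = D ! i"
      proof -
        have "(i + 1 + (n - 1)) mod n = i" using i1 by simp
        thus ?thesis using du[of "n-1"] i1 by simp
      qed
      also have "(D ! i + k - 1) mod k = A ! i" using Anth[of i] i1 by simp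
      finally show ?thesis using rA 1 i1 by simp
    next
      case 2
      have "delta k s ! j = nat ((int (s ! 0) - int (s ! 1)) mod int k)"
        using 2 ls j by (simp add: nth_delta)
      also have "\<dots> = nat ((int (u ! (n - 1)) - int (u ! 0)) mod int k)"
        using sjn[of 1] s0n i1 by simp
      also have "\<dots> = (nat ((int (u ! (n - 1)) - int (u ! 0) - 1) mod int k) + 1) mod k"
        by (rule h2[OF kp])
      also have "nat ((int (u ! (n - 1)) - int (u ! 0) - 1) mod int k) = delta k u ! 0"
        using lu i1 by (simp add: nth_delta)
      also have "delta k u ! 0 = D ! (i + 1)" using du[of 0] i1 by simp
      also have "(D ! (i + 1) + 1) mod k = A ! (i + 1)" using Anth[of "i+1"] i1 by simp
      finally show ?thesis using rA 2 i1 by simp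
    next
      case 3
      define p where "p = (i + j) mod n"
      have pn: "p \<noteq> i" "p \<noteq> i + 1" "p < n"
      proof -
        show "p < n" unfolding p_def using n by simp
        show "p \<noteq> i" "p \<noteq> i + 1"
        proof (atomize (full), cases "i + j < n")
          case True
          hence "p = i + j" unfolding p_def by simp
          thus "p \<noteq> i \<and> p \<noteq> i + 1" using 3 by simp
        next
          case False
          hence "p = (i + j - n) mod n" unfolding p_def by (simp add: le_mod_geq)
          hence "p = i + j - n" using j i1 by simp
          thus "p \<noteq> i \<and> p \<noteq> i + 1" using j False by arith
        qed
      qed
      have "delta k s ! j = nat ((int (s ! (j - 1)) - int (s ! j)) mod int k)"
        using 3 ls j by (simp add: nth_delta)
      also have "\<dots> = nat ((int (u ! (j - 1 - 1)) - int (u ! (j - 1))) mod int k)"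
        using sjn[of "j-1"] sjn[of j] 3 j by simp
      also have "\<dots> = delta k u ! (j - 1)" using lu 3 j by (simp add: nth_delta)
      also have "\<dots> = D ! p"
      proof -
        have "i + 1 + (j - 1) = i + j" using 3 by simp
        thus ?thesis using du[of "j-1"] j unfolding p_def by simp
      qed
      also have "D ! p = A ! p" using Anth[of p] pn by simp
      finally show ?thesis using rA p_def by simp
    qed
  qed
  show ?thesis using ss icr_s u(1) ds AD unfolding A_def D_def by blast
qed


lemma par: assumes U: "U \<in> cycles k n" and nr: "U \<noteq> root k n" and k: "k \<ge> 2" and n: "n \<ge> 1"
  shows "\<exists>s\<in>strs k n. icr k 0 s \<in> U \<and> (\<forall>V. is_parent k n U V \<longleftrightarrow> V = cyc k s)
           \<and> deltaC k (cyc k s) < deltaC k U"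
proof -
  have kp: "k > 0" using k by simp
  obtain s0 where s0: "s0 \<in> strs k n" "U = cyc k s0" using cycles_cyc[OF U] by blast
  define A where "A = parent_array k (deltaC k U)"
  obtain s where s: "s \<in> strs k n" "icr k 0 s \<in> U" and q: "\<exists>q. delta k s = rotate q A"
    and AD: "A < deltaC k U"
    using key[OF s0(1) k n] nr s0(2) unfolding A_def by blast
  obtain q where q: "delta k s = rotate q A" using q by blast
  obtain q' where q': "A = rotate q' (delta k s)" using rot_sym[OF q] by blast
  have iff: "is_parent k n U V \<longleftrightarrow> V = cyc k s" for V
  proof
    assume "V = cyc k s"
    moreover have "cyc k s \<in> cycles k n" using s(1) by (simp add: cycles_def)
    moreover obtain c where "deltaC k (cyc k s) = rotate c (delta k s)" using deltaC_rot[OF s(1) kp n] by blast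
    hence "deltaC k (cyc k s) = rotate (c + q) A" using q by (simp add: rotate_rotate)
    ultimately show "is_parent k n U V" unfolding is_parent_def A_def by blast
  next
    assume ip: "is_parent k n U V"
    then obtain s' where s': "s' \<in> strs k n" "V = cyc k s'" unfolding is_parent_def using cycles_cyc by blast
    obtain m where m: "deltaC k V = rotate m A" using ip unfolding is_parent_def A_def by blast
    obtain c where c: "deltaC k V = rotate c (delta k s')" using deltaC_rot[OF s'(1) kp n] s'(2) by blast
    obtain c' where c': "delta k s' = rotate c' (deltaC k V)" using rot_sym[OF c] by blast
    have "delta k s' = rotate (c' + m + q') (delta k s)" using c' m q' by (simp add: rotate_rotate add.assoc)
    hence "cyc k s' = cyc k s" by (rule L_same[OF s(1) s'(1) kp n])
    thus "V = cyc k s" using s'(2) by simp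
  qed
  have "deltaC k (cyc k s) \<le> rotate q' (delta k s)" by (rule deltaC_le[OF s(1) kp n])
  hence "deltaC k (cyc k s) < deltaC k U" using AD q' by simp
  thus ?thesis using s iff by blast
qed

theorem lemma14:
  fixes k n :: nat
  assumes "k \<ge> 2" and "n \<ge> 1"
  shows "(\<forall>U \<in> cycles k n - {root k n}. \<exists>!V. is_parent k n U V)
       \<and> (\<forall>U \<in> cycles k n - {root k n}. G_arc k (parent k n U) U)
       \<and> (\<forall>U \<in> cycles k n. \<exists>m. (parent k n ^^ m) U = root k n)"
proof (intro conjI ballI)
  fix U assume "U \<in> cycles k n - {root k n}"
  then obtain s where "\<forall>V. is_parent k n U V \<longleftrightarrow> V = cyc k s" using par assms by blast
  thus "\<exists>!V. is_parent k n U V" by blast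
next
  fix U assume "U \<in> cycles k n - {root k n}"
  then obtain s where s: "icr k 0 s \<in> U" "\<forall>V. is_parent k n U V \<longleftrightarrow> V = cyc k s" using par assms by blast
  have "parent k n U = cyc k s" unfolding parent_def by (rule the_equality) (use s(2) in auto)
  thus "G_arc k (parent k n U) U" unfolding G_arc_def using s(1) cyc_self by blast
next
  fix U assume U: "U \<in> cycles k n"
  define r where "r = inv_image (lenlex {(a::nat, b). a < b}) (deltaC k)"
  have wfr: "wf r" unfolding r_def by (intro wf_inv_image wf_lenlex wf_less)
  have "U \<in> cycles k n \<longrightarrow> (\<exists>m. (parent k n ^^ m) U = root k n)"
  proof (induction U rule: wf_induct[OF wfr])
    case (1 U)
    show ?case
    proof
      assume U: "U \<in> cycles k n"
      show "\<exists>m. (parent k n ^^ m) U = root k n"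
      proof (cases "U = root k n")
        case True then show ?thesis by (auto intro: exI[of _ 0])
      next
        case False
        then obtain s where s: "s \<in> strs k n" "\<forall>V. is_parent k n U V \<longleftrightarrow> V = cyc k s"
          and lt: "deltaC k (cyc k s) < deltaC k U" using par U assms by blast
        have pU: "parent k n U = cyc k s" unfolding parent_def by (rule the_equality) (use s(2) in auto)
        have pc: "cyc k s \<in> cycles k n" using s(1) by (simp add: cycles_def)
        obtain s0 where s0: "s0 \<in> strs k n" "U = cyc k s0" using cycles_cyc[OF U] by blast
        have l1: "length (deltaC k (cyc k s)) = n" using deltaC_length[OF s(1)] assms by simp
        have l2: "length (deltaC k U) = n" using deltaC_length[OF s0(1)] s0(2) assms by simp
        have "(deltaC k (cyc k s), deltaC k U) \<in> lexord {(a::nat, b). a < b}"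
          using lt by (simp add: list_less_def)
        hence "(cyc k s, U) \<in> r" unfolding r_def using l1 l2
          by (simp add: lenlex_conv lexord_lex)
        then obtain m where "(parent k n ^^ m) (cyc k s) = root k n" using 1 pc by blast
        hence "(parent k n ^^ (Suc m)) U = root k n" using pU by (simp add: funpow_Suc_right del: funpow.simps)
        thus ?thesis by blast
      qed
    qed
  qed
  thus "\<exists>m. (parent k n ^^ m) U = root k n" using U by blast
qed

end
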